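(* If $G$ is a hypo-unique domination graph of order $n\geq 3$, then $G$ is $2$-edge-connected and $\delta(G)\geq 2$. Moreover, the unicyclic hypo-unique domination graphs are precisely the cycles $C_{3k+1}$, $k\geq 1$.
   Context: All graphs are finite, simple and undirected. A set $D\subseteq V(G)$ is dominating if every vertex of $G$ not in $D$ has a neighbor in $D$; $\gamma(G)$ is the minimum size of a dominating set, and a dominating set of size $\gamma(G)$ is a $\gamma$-set. $G$ is a hypo-unique domination graph if $G$ has at least two $\gamma$-sets but for every $v\in V(G)$ the graph $G-v$ has exactly one $\gamma$-set. $\delta(G)$ is the minimum degree; a unicyclic graph is a connected graph containing exactly one cycle. *)

theory Defs
  imports Main
begin

definition simple_graph :: "'a set \<Rightarrow> ('a \<Rightarrow> 'a \<Rightarrow> bool) \<Rightarrow> bool" where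
  "simple_graph V E \<longleftrightarrow> finite V \<and> (\<forall>x y. E x y \<longrightarrow> E y x) \<and> (\<forall>x. \<not> E x x)
     \<and> (\<forall>x y. E x y \<longrightarrow> x \<in> V \<and> y \<in> V)"

definition dominating :: "'a set \<Rightarrow> ('a \<Rightarrow> 'a \<Rightarrow> bool) \<Rightarrow> 'a set \<Rightarrow> bool" where
  "dominating V E D \<longleftrightarrow> D \<subseteq> V \<and> (\<forall>v \<in> V - D. \<exists>u \<in> D. E v u)"

definition gamma :: "'a set \<Rightarrow> ('a \<Rightarrow> 'a \<Rightarrow> bool) \<Rightarrow> nat" where
  "gamma V E = Min (card ` {D. dominating V E D})"

definition gamma_sets :: "'a set \<Rightarrow> ('a \<Rightarrow> 'a \<Rightarrow> bool) \<Rightarrow> 'a set set" where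
  "gamma_sets V E = {D. dominating V E D \<and> card D = gamma V E}"

definition del_vertex_E :: "('a \<Rightarrow> 'a \<Rightarrow> bool) \<Rightarrow> 'a \<Rightarrow> 'a \<Rightarrow> 'a \<Rightarrow> bool" where
  "del_vertex_E E v = (\<lambda>x y. E x y \<and> x \<noteq> v \<and> y \<noteq> v)"

definition hypo_unique_domination :: "'a set \<Rightarrow> ('a \<Rightarrow> 'a \<Rightarrow> bool) \<Rightarrow> bool" where
  "hypo_unique_domination V E \<longleftrightarrow>
     card (gamma_sets V E) \<ge> 2 \<and>
     (\<forall>v \<in> V. card (gamma_sets (V - {v}) (del_vertex_E E v)) = 1)"

definition connected_graph :: "'a set \<Rightarrow> ('a \<Rightarrow> 'a \<Rightarrow> bool) \<Rightarrow> bool" where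
  "connected_graph V E \<longleftrightarrow> V \<noteq> {} \<and>
     (\<forall>u \<in> V. \<forall>w \<in> V. (\<lambda>x y. E x y \<and> x \<in> V \<and> y \<in> V)\<^sup>*\<^sup>* u w)"

definition del_edge_E :: "('a \<Rightarrow> 'a \<Rightarrow> bool) \<Rightarrow> 'a \<Rightarrow> 'a \<Rightarrow> 'a \<Rightarrow> 'a \<Rightarrow> bool" where
  "del_edge_E E a b = (\<lambda>x y. E x y \<and> {x, y} \<noteq> {a, b})"

definition two_edge_connected :: "'a set \<Rightarrow> ('a \<Rightarrow> 'a \<Rightarrow> bool) \<Rightarrow> bool" where
  "two_edge_connected V E \<longleftrightarrow> connected_graph V E \<and>
     (\<forall>a b. E a b \<longrightarrow> connected_graph V (del_edge_E E a b))"

definition degree :: "'a set \<Rightarrow> ('a \<Rightarrow> 'a \<Rightarrow> bool) \<Rightarrow> 'a \<Rightarrow> nat" where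
  "degree V E v = card {u \<in> V. E v u}"

definition min_degree :: "'a set \<Rightarrow> ('a \<Rightarrow> 'a \<Rightarrow> bool) \<Rightarrow> nat" where
  "min_degree V E = Min (degree V E ` V)"

text \<open>A cycle of G, given as a list of distinct vertices (length at least 3) with
consecutive (cyclically) vertices adjacent; the cycle as a subgraph is identified by
its edge set.\<close>
definition is_cycle :: "'a set \<Rightarrow> ('a \<Rightarrow> 'a \<Rightarrow> bool) \<Rightarrow> 'a list \<Rightarrow> bool" where
  "is_cycle V E xs \<longleftrightarrow> distinct xs \<and> length xs \<ge> 3 \<and> set xs \<subseteq> V \<and>
     (\<forall>i < length xs. E (xs ! i) (xs ! ((i + 1) mod length xs)))"

definition cycle_edges :: "'a list \<Rightarrow> 'a set set" where
  "cycle_edges xs = {{xs ! i, xs ! ((i + 1) mod length xs)} | i. i < length xs}"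

definition unicyclic :: "'a set \<Rightarrow> ('a \<Rightarrow> 'a \<Rightarrow> bool) \<Rightarrow> bool" where
  "unicyclic V E \<longleftrightarrow> connected_graph V E \<and>
     (\<exists>!C. C \<in> {cycle_edges xs | xs. is_cycle V E xs})"

definition cycle_graph_E :: "nat \<Rightarrow> nat \<Rightarrow> nat \<Rightarrow> bool" where
  "cycle_graph_E n i j \<longleftrightarrow> i < n \<and> j < n \<and> i \<noteq> j \<and>
     (j = (i + 1) mod n \<or> i = (j + 1) mod n)"

definition isomorphic_to_cycle :: "'a set \<Rightarrow> ('a \<Rightarrow> 'a \<Rightarrow> bool) \<Rightarrow> nat \<Rightarrow> bool" where
  "isomorphic_to_cycle V E n \<longleftrightarrow> (\<exists>f. bij_betw f V {0..<n} \<and>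
     (\<forall>x \<in> V. \<forall>y \<in> V. E x y \<longleftrightarrow> cycle_graph_E n (f x) (f y)))"

end

theory Submission
  imports Defs
begin

lemma dom_self: "dominating V E V" by (auto simp: dominating_def)

lemma finite_doms: "finite V \<Longrightarrow> finite {D. dominating V E D}"
  by (rule finite_subset[of _ "Pow V"]) (auto simp: dominating_def)

lemma gamma_le: "finite V \<Longrightarrow> dominating V E D \<Longrightarrow> gamma V E \<le> card D"
  unfolding gamma_def by (rule Min_le) (auto intro: finite_doms)

lemma gamma_ex: "finite V \<Longrightarrow> \<exists>D. dominating V E D \<and> card D = gamma V E"
proof -
  assume f: "finite V"
  have "gamma V E \<in> card ` {D. dominating V E D}"
    unfolding gamma_def using f dom_self[of V E] by (intro Min_in) (auto intro: finite_doms)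
  thus ?thesis by auto
qed

lemma gamma_setsI: "finite V \<Longrightarrow> dominating V E D \<Longrightarrow> card D \<le> gamma V E \<Longrightarrow> D \<in> gamma_sets V E"
  using gamma_le[of V E D] by (auto simp: gamma_sets_def)



lemma card_ge2_ex: "card A \<ge> 2 \<Longrightarrow> \<exists>x\<in>A. \<exists>y\<in>A. x \<noteq> y"
proof (rule ccontr)
  assume c: "card A \<ge> 2" and n: "\<not> (\<exists>x\<in>A. \<exists>y\<in>A. x \<noteq> y)"
  have "finite A" using c by (metis card.infinite not_numeral_le_zero)
  hence "card A \<le> Suc 0" using n by (subst card_le_Suc0_iff_eq) auto
  thus False using c by simp
qed

locale hud =
  fixes V :: "'a set" and E :: "'a \<Rightarrow> 'a \<Rightarrow> bool"
  assumes sg: "simple_graph V E" and hudA: "hypo_unique_domination V E" and n3: "card V \<ge> 3"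
begin

lemma fin: "finite V" using sg by (simp add: simple_graph_def)
lemma sym: "E x y \<Longrightarrow> E y x" using sg by (simp add: simple_graph_def)
lemma irr: "\<not> E x x" using sg by (simp add: simple_graph_def)
lemma inV1: "E x y \<Longrightarrow> x \<in> V" using sg by (simp add: simple_graph_def)
lemma inV2: "E x y \<Longrightarrow> y \<in> V" using sg by (simp add: simple_graph_def)

abbreviation "g \<equiv> gamma V E"
abbreviation "GS \<equiv> gamma_sets V E"
abbreviation "dm D \<equiv> dominating V E D"
abbreviation "dmv v D \<equiv> dominating (V - {v}) (del_vertex_E E v) D"
definition "gv v = gamma (V - {v}) (del_vertex_E E v)"
definition "Sv v = (THE D. D \<in> gamma_sets (V - {v}) (del_vertex_E E v))"

lemma dm_iff: "dm D \<longleftrightarrow> D \<subseteq> V \<and> (\<forall>x\<in>V - D. \<exists>u\<in>D. E x u)"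
  by (simp add: dominating_def)

lemma dmv_iff: "dmv v D \<longleftrightarrow> D \<subseteq> V - {v} \<and> (\<forall>x\<in>V - {v} - D. \<exists>u\<in>D. E x u)"
  unfolding dominating_def del_vertex_E_def by auto

lemma GS_iff: "D \<in> GS \<longleftrightarrow> dm D \<and> card D = g" by (simp add: gamma_sets_def)

lemma g_le: "dm D \<Longrightarrow> g \<le> card D" using gamma_le fin by blast
lemma gv_le: "dmv v D \<Longrightarrow> gv v \<le> card D" unfolding gv_def using gamma_le fin by blast

lemma GSI: "dm D \<Longrightarrow> card D \<le> g \<Longrightarrow> D \<in> GS" using g_le GS_iff by fastforce

lemma GSv_uniq: assumes "v \<in> V" shows "\<exists>!D. D \<in> gamma_sets (V - {v}) (del_vertex_E E v)"
proof -
  have "card (gamma_sets (V - {v}) (del_vertex_E E v)) = 1" using hudA assms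
    by (simp add: hypo_unique_domination_def)
  thus ?thesis by (metis card_1_singletonE singleton_iff)
qed

lemma Sv_in: "v \<in> V \<Longrightarrow> Sv v \<in> gamma_sets (V - {v}) (del_vertex_E E v)"
  unfolding Sv_def using GSv_uniq by (rule theI')

lemma Sv_eq: "v \<in> V \<Longrightarrow> D \<in> gamma_sets (V - {v}) (del_vertex_E E v) \<Longrightarrow> D = Sv v"
  using GSv_uniq Sv_in by blast

lemma Sv_dmv: "v \<in> V \<Longrightarrow> dmv v (Sv v)" using Sv_in by (simp add: gamma_sets_def)
lemma Sv_card: "v \<in> V \<Longrightarrow> card (Sv v) = gv v" using Sv_in by (simp add: gamma_sets_def gv_def)

lemma Sv_eqI: "v \<in> V \<Longrightarrow> dmv v D \<Longrightarrow> card D \<le> gv v \<Longrightarrow> D = Sv v"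
  apply (rule Sv_eq, assumption)
  using gv_le[of v D] by (simp add: gamma_sets_def gv_def)

lemma GS_ne: "\<exists>D1\<in>GS. \<exists>D2\<in>GS. D1 \<noteq> D2"
  using hudA card_ge2_ex by (auto simp: hypo_unique_domination_def)

lemma GS_ex: "\<exists>D. D \<in> GS" using GS_ne by blast

lemma GS_sub: "D \<in> GS \<Longrightarrow> D \<subseteq> V" by (simp add: GS_iff dm_iff)

lemma GS_fin: "D \<in> GS \<Longrightarrow> finite D" using GS_sub fin finite_subset by blast

lemma Sv_sub: "v \<in> V \<Longrightarrow> Sv v \<subseteq> V - {v}" using Sv_dmv dmv_iff by blast
lemma Sv_fin: "v \<in> V \<Longrightarrow> finite (Sv v)" using Sv_sub fin finite_subset by blast

lemma Vne: "V \<noteq> {}" using n3 by auto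

lemma g_pos: "g \<ge> 1"
proof -
  obtain D where "D \<in> GS" using GS_ex by blast
  moreover have "D \<noteq> {}" using calculation Vne by (auto simp: GS_iff dm_iff)
  ultimately show ?thesis using GS_fin[of D] GS_iff[of D] card_0_eq[of D]
    by (metis One_nat_def Suc_leI gr0I)
qed

lemma gv_ge: assumes "v \<in> V" shows "g \<le> gv v + 1"
proof -
  have "dm (Sv v \<union> {v})" using Sv_dmv[OF assms] assms unfolding dmv_iff dm_iff by blast
  hence "g \<le> card (Sv v \<union> {v})" by (rule g_le)
  also have "\<dots> \<le> card (Sv v) + 1" by (simp add: card_insert_le_m1 card_Un_le)
  finally show ?thesis using Sv_card[OF assms] by simp
qed

lemma dm_dmv: "dm D \<Longrightarrow> v \<notin> D \<Longrightarrow> dmv v D" unfolding dm_iff dmv_iff by blast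

lemma avoid_uniq:
  assumes v: "v \<in> V" and B: "g \<le> gv v" and D1: "D1 \<in> GS" and D2: "D2 \<in> GS"
    and n1: "v \<notin> D1" and n2: "v \<notin> D2"
  shows "D1 = D2"
proof -
  have "D1 = Sv v" using Sv_eqI[OF v dm_dmv[OF _ n1]] D1 B by (auto simp: GS_iff)
  moreover have "D2 = Sv v" using Sv_eqI[OF v dm_dmv[OF _ n2]] D2 B by (auto simp: GS_iff)
  ultimately show ?thesis by simp
qed

lemma priv:
  assumes v: "v \<in> V" and B: "g \<le> gv v" and D: "D \<in> GS" and vD: "v \<in> D"
  shows "\<exists>p. p \<in> V \<and> p \<notin> D \<and> E p v \<and> (\<forall>x\<in>D. E p x \<longrightarrow> x = v)"
proof (rule ccontr)
  assume n: "\<not> ?thesis"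
  have "dmv v (D - {v})"
    unfolding dmv_iff
  proof
    show "D - {v} \<subseteq> V - {v}" using GS_sub[OF D] by blast
    show "\<forall>x\<in>V - {v} - (D - {v}). \<exists>u\<in>D - {v}. E x u"
    proof
      fix x assume x: "x \<in> V - {v} - (D - {v})"
      then obtain u where u: "u \<in> D" "E x u" using D by (auto simp: GS_iff dm_iff)
      show "\<exists>u\<in>D - {v}. E x u"
      proof (cases "\<exists>u\<in>D - {v}. E x u")
        case False
        hence "\<forall>y\<in>D. E x y \<longrightarrow> y = v" by blast
        hence "E x v" using u by blast
        thus ?thesis using n x False \<open>\<forall>y\<in>D. E x y \<longrightarrow> y = v\<close> by blast
      qed
    qed
  qed
  hence "gv v \<le> card (D - {v})" by (rule gv_le)
  also have "\<dots> = g - 1" using D vD GS_fin by (simp add: GS_iff)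
  finally show False using B g_pos by simp
qed

definition "A v \<longleftrightarrow> gv v < g"

lemma A_gv: "v \<in> V \<Longrightarrow> A v \<Longrightarrow> gv v = g - 1" using gv_ge A_def by fastforce

lemma A_nonadj: assumes v: "v \<in> V" and A: "A v" shows "\<forall>x\<in>Sv v. \<not> E v x"
proof (rule ccontr)
  assume "\<not> ?thesis"
  then obtain x where x: "x \<in> Sv v" "E v x" by blast
  have "dm (Sv v)" using Sv_dmv[OF v] x sym unfolding dmv_iff dm_iff by blast
  hence "g \<le> card (Sv v)" by (rule g_le)
  thus False using Sv_card[OF v] A by (simp add: A_def)
qed

lemma A_notin: "v \<in> V \<Longrightarrow> v \<notin> Sv v" using Sv_sub by blast

lemma A_GS: assumes v: "v \<in> V" and A: "A v" and t: "t = v \<or> E v t"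
  shows "insert t (Sv v) \<in> GS"
proof -
  have tV: "t \<in> V" using t v inV2 by blast
  have tn: "t \<notin> Sv v" using t A_notin[OF v] A_nonadj[OF v A] by blast
  have "dm (insert t (Sv v))" unfolding dm_iff
  proof
    show "insert t (Sv v) \<subseteq> V" using tV Sv_sub[OF v] by blast
    show "\<forall>x\<in>V - insert t (Sv v). \<exists>u\<in>insert t (Sv v). E x u"
    proof
      fix x assume x: "x \<in> V - insert t (Sv v)"
      show "\<exists>u\<in>insert t (Sv v). E x u"
      proof (cases "x = v")
        case True
        thus ?thesis using t x by auto
      next
        case False
        thus ?thesis using Sv_dmv[OF v] x unfolding dmv_iff by blast
      qed
    qed
  qed
  moreover have "card (insert t (Sv v)) = g"
    using tn Sv_fin[OF v] Sv_card[OF v] A_gv[OF v A] g_pos by simp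
  ultimately show ?thesis by (simp add: GS_iff)
qed

end

context hud begin

lemma no_iso: assumes v: "v \<in> V" shows "\<exists>u. E v u"
proof (rule ccontr)
  assume n: "\<not> ?thesis"
  have key: "D = insert v (Sv v)" if D: "D \<in> GS" for D
  proof -
    have vD: "v \<in> D" using D v n sym by (auto simp: GS_iff dm_iff)
    have "dmv v (D - {v})" unfolding dmv_iff
    proof
      show "D - {v} \<subseteq> V - {v}" using GS_sub[OF D] by blast
      show "\<forall>x\<in>V - {v} - (D - {v}). \<exists>u\<in>D - {v}. E x u"
      proof
        fix x assume x: "x \<in> V - {v} - (D - {v})"
        then obtain u where "u \<in> D" "E x u" using D by (auto simp: GS_iff dm_iff)
        moreover have "u \<noteq> v" using calculation n sym by blast
        ultimately show "\<exists>u\<in>D - {v}. E x u" by blast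
      qed
    qed
    moreover have "card (D - {v}) = g - 1" using D vD GS_fin by (simp add: GS_iff)
    moreover have "g - 1 \<le> gv v" using gv_ge[OF v] by simp
    ultimately have "D - {v} = Sv v" using Sv_eqI[OF v] by simp
    thus ?thesis using vD by blast
  qed
  obtain D1 D2 where "D1 \<in> GS" "D2 \<in> GS" "D1 \<noteq> D2" using GS_ne by blast
  thus False using key by blast
qed

lemma g2: "g \<ge> 2"
proof (rule ccontr)
  assume "\<not> g \<ge> 2"
  hence g1: "g = 1" using g_pos by simp
  obtain D1 D2 where D: "D1 \<in> GS" "D2 \<in> GS" "D1 \<noteq> D2" using GS_ne by blast
  obtain x where x: "D1 = {x}" using D g1 by (auto simp: GS_iff card_1_singleton_iff)
  obtain y where y: "D2 = {y}" using D g1 by (auto simp: GS_iff card_1_singleton_iff)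
  have "\<exists>z\<in>V. z \<noteq> x \<and> z \<noteq> y"
  proof (rule ccontr)
    assume "\<not> ?thesis"
    hence "V \<subseteq> {x, y}" by blast
    hence "card V \<le> card {x,y}" by (simp add: card_mono)
    also have "\<dots> \<le> 2" by (simp add: card_insert_le_m1)
    finally show False using n3 by simp
  qed
  then obtain z where z: "z \<in> V" "z \<noteq> x" "z \<noteq> y" by blast
  show False
  proof (cases "g \<le> gv z")
    case True
    thus False using avoid_uniq[OF z(1) True D(1) D(2)] x y z D(3) by blast
  next
    case False
    hence "gv z = 0" using g1 by simp
    hence "Sv z = {}" using Sv_card[OF z(1)] Sv_fin[OF z(1)] by simp
    moreover have "V - {z} \<noteq> {}" using z D GS_sub x by blast
    ultimately show False using Sv_dmv[OF z(1)] unfolding dmv_iff by blast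
  qed
qed

lemma lemX:
  assumes w: "w \<in> V" and Bw: "g \<le> gv w" and D1: "D1 \<in> GS" and D2: "D2 \<in> GS" and ne: "D1 \<noteq> D2"
    and v1: "v \<in> D1" and v2: "v \<in> D2" and wn: "w \<notin> D1" and wv: "E w v"
    and pr: "\<forall>x\<in>D1. E w x \<longrightarrow> x = v"
  shows False
proof -
  have wD2: "w \<in> D2" using avoid_uniq[OF w Bw D1 D2] wn ne by blast
  obtain q where q: "q \<in> V" "q \<notin> D2" "E q w" "\<forall>x\<in>D2. E q x \<longrightarrow> x = w"
    using priv[OF w Bw D2 wD2] by blast
  have qn1: "q \<notin> D1"
  proof
    assume "q \<in> D1"
    hence "q = v" using pr q(3) sym by blast
    thus False using q(2) v2 by blast
  qed
  have Aq: "A q" using avoid_uniq[OF q(1) _ D1 D2] qn1 q(2) ne by (force simp: A_def)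
  have G: "insert q (Sv q) \<in> GS" using A_GS[OF q(1) Aq] by simp
  have "w \<notin> insert q (Sv q)" using A_nonadj[OF q(1) Aq] q(3) wD2 q(2) by blast
  hence "insert q (Sv q) = D1" using avoid_uniq[OF w Bw G D1] wn by blast
  thus False using qn1 by blast
qed

lemma case_i:
  assumes v: "v \<in> V" and Bv: "g \<le> gv v" and all: "\<forall>D\<in>GS. v \<in> D"
  shows False
proof -
  obtain D1 D2 where D: "D1 \<in> GS" "D2 \<in> GS" "D1 \<noteq> D2" using GS_ne by blast
  obtain p where p: "p \<in> V" "p \<notin> D1" "E p v" "\<forall>x\<in>D1. E p x \<longrightarrow> x = v"
    using priv[OF v Bv D(1)] all D by blast
  show False
  proof (cases "A p")
    case True
    have "insert p (Sv p) \<in> GS" using A_GS[OF p(1) True] by simp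
    moreover have "v \<notin> insert p (Sv p)" using A_nonadj[OF p(1) True] p(3) sym p(2) all D by blast
    ultimately show False using all by blast
  next
    case False
    thus False using lemX[OF p(1) _ D(1) D(2) D(3) _ _ p(2) p(3) p(4)] all D by (auto simp: A_def)
  qed
qed

end

context hud begin

lemma m2:
  assumes D1: "D1 \<in> GS" and D2: "D2 \<in> GS" and ne: "D1 \<noteq> D2"
    and all: "\<forall>D\<in>GS. D = D1 \<or> D = D2"
  shows False
proof -
  have disj: "D1 \<inter> D2 = {}"
  proof (rule ccontr)
    assume "D1 \<inter> D2 \<noteq> {}"
    then obtain s where s: "s \<in> D1" "s \<in> D2" by blast
    have sV: "s \<in> V" using s GS_sub D1 by blast
    have alls: "\<forall>D\<in>GS. s \<in> D" using all s by blast
    show False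
    proof (cases "A s")
      case False
      thus False using case_i[OF sV _ alls] by (auto simp: A_def)
    next
      case True
      obtain t where t: "E s t" using no_iso[OF sV] by blast
      have "insert t (Sv s) \<in> GS" using A_GS[OF sV True] t by simp
      moreover have "s \<notin> insert t (Sv s)" using A_notin[OF sV] t irr by blast
      ultimately show False using alls by blast
    qed
  qed
  have cover: "V \<subseteq> D1 \<union> D2"
  proof
    fix z assume z: "z \<in> V"
    show "z \<in> D1 \<union> D2"
    proof (rule ccontr)
      assume zn: "z \<notin> D1 \<union> D2"
      have Az: "A z" using avoid_uniq[OF z _ D1 D2] zn ne by (force simp: A_def)
      have "insert z (Sv z) \<in> GS" using A_GS[OF z Az] by simp
      thus False using all zn by blast
    qed
  qed
  have allB: "\<not> A u" if u: "u \<in> V" for u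
  proof
    assume Au: "A u"
    obtain t where t: "E u t" using no_iso[OF u] by blast
    have X1: "insert u (Sv u) \<in> GS" using A_GS[OF u Au] by simp
    have X2: "insert t (Sv u) \<in> GS" using A_GS[OF u Au] t by simp
    have "u \<notin> insert t (Sv u)" using A_notin[OF u] t irr by blast
    hence X12: "insert u (Sv u) \<noteq> insert t (Sv u)" by blast
    have "insert u (Sv u) \<inter> insert t (Sv u) = D1 \<inter> D2"
      using all X1 X2 X12 ne by (metis Int_commute)
    hence "Sv u \<subseteq> D1 \<inter> D2" by blast
    hence "Sv u = {}" using disj by blast
    hence "gv u = 0" using Sv_card[OF u] by simp
    thus False using A_gv[OF u Au] g2 by simp
  qed
  define f where "f x = (SOME p. p \<in> V \<and> p \<notin> D1 \<and> E p x \<and> (\<forall>y\<in>D1. E p y \<longrightarrow> y = x))" for x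
  have fspec: "f x \<in> V \<and> f x \<notin> D1 \<and> E (f x) x \<and> (\<forall>y\<in>D1. E (f x) y \<longrightarrow> y = x)" if x: "x \<in> D1" for x
  proof -
    have xV: "x \<in> V" using x GS_sub D1 by blast
    have "g \<le> gv x" using allB[OF xV] by (simp add: A_def)
    from priv[OF xV this D1 x] show ?thesis unfolding f_def by (rule someI_ex)
  qed
  have inj: "inj_on f D1"
  proof
    fix x y assume "x \<in> D1" "y \<in> D1" "f x = f y"
    thus "x = y" using fspec by metis
  qed
  have fsub: "f ` D1 \<subseteq> D2" using fspec cover by blast
  have fimg: "f ` D1 = D2"
  proof (rule card_subset_eq)
    show "finite D2" using GS_fin D2 by blast
    show "f ` D1 \<subseteq> D2" by (rule fsub)
    show "card (f ` D1) = card D2" using card_image[OF inj] D1 D2 by (simp add: GS_iff)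
  qed
  have c1: "card D1 \<ge> 2" using D1 g2 by (simp add: GS_iff)
  then obtain x x' where xx: "x \<in> D1" "x' \<in> D1" "x \<noteq> x'" using card_ge2_ex by blast
  have xV: "x \<in> V" using xx GS_sub D1 by blast
  define T where "T = insert (f x) (D1 - {x})"
  have dT: "dmv x T" unfolding dmv_iff
  proof
    have "f x \<noteq> x" using fspec[OF xx(1)] irr by metis
    thus "T \<subseteq> V - {x}" using fspec[OF xx(1)] GS_sub[OF D1] unfolding T_def by auto
    show "\<forall>y\<in>V - {x} - T. \<exists>u\<in>T. E y u"
    proof
      fix y assume y: "y \<in> V - {x} - T"
      hence "y \<in> D2" using cover unfolding T_def by blast
      then obtain x'' where x'': "x'' \<in> D1" "y = f x''" using fimg by blast
      hence "x'' \<noteq> x" using y unfolding T_def by blast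
      thus "\<exists>u\<in>T. E y u" using fspec[OF x''(1)] x'' unfolding T_def by blast
    qed
  qed
  have Bx: "g \<le> gv x" using allB[OF xV] by (simp add: A_def)
  have "dmv x D2" using dm_dmv[of D2 x] D2 disj xx by (auto simp: GS_iff)
  hence gvx: "gv x \<le> g" using gv_le D2 by (force simp: GS_iff)
  have "card T = g" unfolding T_def using fspec[OF xx(1)] xx GS_fin[OF D1] D1 g_pos
    by (simp add: GS_iff)
  hence "T = Sv x" using Sv_eqI[OF xV dT] Bx gvx by simp
  moreover have "D2 = Sv x" using Sv_eqI[OF xV \<open>dmv x D2\<close>] Bx gvx D2 by (simp add: GS_iff)
  ultimately have "x' \<in> D2" using xx unfolding T_def by blast
  thus False using disj xx by blast
qed

lemma leaf_rm:
  assumes D: "D \<in> GS" and y: "y \<in> D" and v: "v \<in> D" and yv: "E y v"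
    and lf: "\<forall>t. E y t \<longrightarrow> t = v"
  shows False
proof -
  have "dm (D - {y})" unfolding dm_iff
  proof
    show "D - {y} \<subseteq> V" using GS_sub[OF D] by blast
    show "\<forall>x\<in>V - (D - {y}). \<exists>u\<in>D - {y}. E x u"
    proof
      fix x assume x: "x \<in> V - (D - {y})"
      show "\<exists>u\<in>D - {y}. E x u"
      proof (cases "x = y")
        case True thus ?thesis using yv v irr by blast
      next
        case False
        then obtain u where u: "u \<in> D" "E x u" using x D by (auto simp: GS_iff dm_iff)
        have "u \<noteq> y" using u lf sym False x v by blast
        thus ?thesis using u by blast
      qed
    qed
  qed
  hence "g \<le> card (D - {y})" by (rule g_le)
  thus False using D y GS_fin g_pos by (simp add: GS_iff)
qed

lemma lemma1: assumes v: "v \<in> V" shows "A v"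
proof (rule ccontr)
  assume "\<not> A v"
  hence Bv: "g \<le> gv v" by (simp add: A_def)
  obtain D0 where D0: "D0 \<in> GS" "v \<notin> D0" using case_i[OF v Bv] by blast
  have uniq0: "D = D0" if "D \<in> GS" "v \<notin> D" for D using avoid_uniq[OF v Bv that(1) D0(1) that(2) D0(2)] .
  obtain D1 where D1: "D1 \<in> GS" "D1 \<noteq> D0" using GS_ne by blast
  obtain D2 where D2: "D2 \<in> GS" "D2 \<noteq> D0" "D2 \<noteq> D1" using m2[OF D0(1) D1(1)] D1 by blast
  have other: "\<exists>D'\<in>GS. v \<in> D' \<and> D' \<noteq> D" for D
    using D1 D2 uniq0 by metis
  have PL: "A p \<and> (\<forall>t. E p t \<longrightarrow> t = v) \<and> insert p (Sv p) = D0"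
    if D: "D \<in> GS" "v \<in> D" and p: "p \<in> V" "p \<notin> D" "E p v" "\<forall>x\<in>D. E p x \<longrightarrow> x = v" for D p
  proof -
    have Ap: "A p"
    proof (rule ccontr)
      assume "\<not> A p"
      moreover obtain D' where "D' \<in> GS" "v \<in> D'" "D' \<noteq> D" using other by blast
      ultimately show False using lemX[OF p(1) _ D(1) _ _ D(2) _ p(2) p(3) p(4)] by (auto simp: A_def)
    qed
    have vn: "v \<notin> insert p (Sv p)" using A_nonadj[OF p(1) Ap] p(3) sym p(2) D(2) by blast
    have eq0: "insert p (Sv p) = D0" using uniq0 A_GS[OF p(1) Ap] vn by blast
    have "t = v" if t: "E p t" for t
    proof (rule ccontr)
      assume tv: "t \<noteq> v"
      have "insert t (Sv p) \<in> GS" using A_GS[OF p(1) Ap] t by simp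
      moreover have "v \<notin> insert t (Sv p)" using vn tv by blast
      ultimately have "insert t (Sv p) = D0" using uniq0 by blast
      hence "p \<in> insert t (Sv p)" using eq0 by blast
      thus False using A_notin[OF p(1)] t irr by blast
    qed
    thus ?thesis using Ap eq0 by blast
  qed
  have v1: "v \<in> D1" using uniq0 D1 by blast
  obtain p where p: "p \<in> V" "p \<notin> D1" "E p v" "\<forall>x\<in>D1. E p x \<longrightarrow> x = v"
    using priv[OF v Bv D1(1) v1] by blast
  note pl = PL[OF D1(1) v1 p]
  have Ap: "A p" using pl by blast
  define U where "U = insert v (Sv p)"
  have U: "U \<in> GS" unfolding U_def using A_GS[OF p(1) Ap] p(3) sym by blast
  obtain D' where D': "D' \<in> GS" "v \<in> D'" "D' \<noteq> U" using other by blast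
  have pD': "p \<notin> D'"
  proof
    assume "p \<in> D'"
    thus False using leaf_rm[OF D'(1) _ D'(2) p(3)] pl by blast
  qed
  define T where "T = insert p (D' - {v})"
  have gvv: "gv v = g"
  proof -
    have "gv v \<le> card D0" using gv_le dm_dmv D0 by (force simp: GS_iff)
    thus ?thesis using Bv D0 by (simp add: GS_iff)
  qed
  have D0S: "D0 = Sv v" using Sv_eqI[OF v dm_dmv[OF _ D0(2)]] D0 gvv by (simp add: GS_iff)
  show False
  proof (cases "dmv v T")
    case True
    have "card T = g" unfolding T_def using pD' D' GS_fin[OF D'(1)] g_pos by (simp add: GS_iff)
    hence "T = Sv v" using Sv_eqI[OF v True] gvv by simp
    hence "T = insert p (Sv p)" using D0S pl by simp
    hence "D' - {v} = Sv p" unfolding T_def using pD' A_notin[OF p(1)]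
      by (metis Diff_iff insert_ident)
    hence "D' = U" unfolding U_def using D'(2) by blast
    thus False using D' by blast
  next
    case False
    have TV: "T \<subseteq> V - {v}" unfolding T_def using p irr GS_sub[OF D'(1)] by blast
    then obtain y where y: "y \<in> V - {v} - T" "\<forall>u\<in>T. \<not> E y u" using False unfolding dmv_iff by blast
    have yD': "y \<notin> D'" using y unfolding T_def by blast
    have ypr: "\<forall>x\<in>D'. E y x \<longrightarrow> x = v" using y unfolding T_def by blast
    have "y \<in> V - D'" using y yD' by blast
    then obtain u where "u \<in> D'" "E y u" using D'(1) unfolding GS_iff dm_iff by blast
    hence yv: "E y v" using ypr by blast
    note yl = PL[OF D'(1) D'(2) _ yD' yv ypr]
    have "y \<noteq> p" using y unfolding T_def by blast
    hence "y \<in> Sv p" using yl y pl by blast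
    hence "y \<in> U" unfolding U_def by blast
    thus False using leaf_rm[OF U _ _ yv] yl y unfolding U_def by blast
  qed
qed

end

context hud begin

lemma two_nbrs: assumes v: "v \<in> V" shows "\<exists>u w. E v u \<and> E v w \<and> u \<noteq> w"
proof (rule ccontr)
  assume n: "\<not> ?thesis"
  obtain u where u: "E v u" using no_iso[OF v] by blast
  have lf: "\<forall>w. E v w \<longrightarrow> w = u" using n u by blast
  have uV: "u \<in> V" using u inV2 by blast
  have Au: "A u" using lemma1[OF uV] .
  have "v \<in> V - {u}" using v u irr by blast
  moreover have "v \<notin> Sv u" using A_nonadj[OF uV Au] u sym by blast
  ultimately obtain x where "x \<in> Sv u" "E v x" using Sv_dmv[OF uV] unfolding dmv_iff by blast
  thus False using lf A_notin[OF uV] by blast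
qed

lemma mindeg: "min_degree V E \<ge> 2"
  unfolding min_degree_def
proof (subst Min_ge_iff)
  show "finite (degree V E ` V)" using fin by simp
  show "degree V E ` V \<noteq> {}" using Vne by simp
  show "\<forall>a\<in>degree V E ` V. 2 \<le> a"
  proof
    fix d assume "d \<in> degree V E ` V"
    then obtain v where v: "v \<in> V" "d = degree V E v" by blast
    obtain u w where uw: "E v u" "E v w" "u \<noteq> w" using two_nbrs[OF v(1)] by blast
    have "{u, w} \<subseteq> {x \<in> V. E v x}" using uw inV2 by blast
    hence "card {u, w} \<le> card {x \<in> V. E v x}" using fin by (intro card_mono) auto
    thus "2 \<le> d" using v uw by (simp add: degree_def)
  qed
qed

lemma gv_all: "v \<in> V \<Longrightarrow> gv v = g - 1" using A_gv lemma1 by blast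

lemma part_P:
  assumes un: "V1 \<union> V2 = V" and di: "V1 \<inter> V2 = {}" and a: "a \<in> V1" and b: "b \<in> V2"
    and cr: "\<forall>x y. E x y \<longrightarrow> x \<in> V1 \<longrightarrow> y \<in> V2 \<longrightarrow> x = a \<and> y = b"
  shows "Sv b = (Sv a \<inter> V1) \<union> (Sv b \<inter> V2) \<union> {a}"
proof -
  have aV: "a \<in> V" and bV: "b \<in> V" using a b un by auto
  have ab: "a \<noteq> b" using a b di by blast
  note Sa = Sv_sub[OF aV] and Sb = Sv_sub[OF bV]
  note da = Sv_dmv[OF aV] and db = Sv_dmv[OF bV]
  note na = A_notin[OF aV] and nb = A_notin[OF bV]
  have fa: "finite (Sv a)" and fb: "finite (Sv b)" using Sv_fin aV bV by auto
  define D where "D = (Sv b \<inter> V1) \<union> (Sv a \<inter> V2)"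
  have dD: "dm D" unfolding dm_iff
  proof
    show "D \<subseteq> V" unfolding D_def using un by blast
    show "\<forall>x\<in>V - D. \<exists>u\<in>D. E x u"
    proof
      fix x assume x: "x \<in> V - D"
      show "\<exists>u\<in>D. E x u"
      proof (cases "x \<in> V1")
        case True
        hence "x \<in> V - {b} - Sv b" using x di b unfolding D_def by blast
        then obtain u where u: "u \<in> Sv b" "E x u" using db unfolding dmv_iff by blast
        have "u \<in> V1"
        proof (rule ccontr)
          assume "u \<notin> V1"
          hence "u \<in> V2" using u Sb un by blast
          hence "u = b" using cr u True by blast
          thus False using u nb by blast
        qed
        thus ?thesis using u unfolding D_def by blast
      next
        case False
        hence x2: "x \<in> V2" using x un by blast
        hence "x \<in> V - {a} - Sv a" using x di a unfolding D_def by blast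
        then obtain u where u: "u \<in> Sv a" "E x u" using da unfolding dmv_iff by blast
        have "u \<in> V2"
        proof (rule ccontr)
          assume "u \<notin> V2"
          hence "u \<in> V1" using u Sa un by blast
          hence "u = a" using cr u sym x2 by blast
          thus False using u na by blast
        qed
        thus ?thesis using u unfolding D_def by blast
      qed
    qed
  qed
  have c1: "g \<le> card (Sv b \<inter> V1) + card (Sv a \<inter> V2)"
  proof -
    have "g \<le> card D" using g_le[OF dD] .
    also have "\<dots> = card (Sv b \<inter> V1) + card (Sv a \<inter> V2)" unfolding D_def
      using fa fb di by (intro card_Un_disjoint) auto
    finally show ?thesis .
  qed
  have c2: "card (Sv a) = card (Sv a \<inter> V1) + card (Sv a \<inter> V2)"
  proof -
    have "Sv a = (Sv a \<inter> V1) \<union> (Sv a \<inter> V2)" using Sa un by blast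
    hence "card (Sv a) = card ((Sv a \<inter> V1) \<union> (Sv a \<inter> V2))" by simp
    also have "\<dots> = card (Sv a \<inter> V1) + card (Sv a \<inter> V2)"
      using fa di by (intro card_Un_disjoint) auto
    finally show ?thesis .
  qed
  have c3: "card (Sv b) = card (Sv b \<inter> V1) + card (Sv b \<inter> V2)"
  proof -
    have "Sv b = (Sv b \<inter> V1) \<union> (Sv b \<inter> V2)" using Sb un by blast
    hence "card (Sv b) = card ((Sv b \<inter> V1) \<union> (Sv b \<inter> V2))" by simp
    also have "\<dots> = card (Sv b \<inter> V1) + card (Sv b \<inter> V2)"
      using fa fb di by (intro card_Un_disjoint) auto
    finally show ?thesis .
  qed
  have ca: "card (Sv a) = g - 1" using Sv_card[OF aV] gv_all[OF aV] by simp
  have cb: "card (Sv b) = g - 1" using Sv_card[OF bV] gv_all[OF bV] by simp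
  have c4: "card (Sv a \<inter> V1) + card (Sv b \<inter> V2) + 1 \<le> g - 1"
    using c1 c2 c3 ca cb g2 by linarith
  define T where "T = (Sv a \<inter> V1) \<union> (Sv b \<inter> V2) \<union> {a}"
  have cT: "card T \<le> g - 1"
  proof -
    have "card T \<le> card ((Sv a \<inter> V1) \<union> (Sv b \<inter> V2)) + card {a}" unfolding T_def
      by (rule card_Un_le)
    also have "\<dots> \<le> card (Sv a \<inter> V1) + card (Sv b \<inter> V2) + 1"
      using card_Un_le[of "Sv a \<inter> V1" "Sv b \<inter> V2"] by simp
    finally show ?thesis using c4 by linarith
  qed
  have dT: "dmv b T" unfolding dmv_iff
  proof
    show "T \<subseteq> V - {b}" unfolding T_def using Sa Sb nb di b aV ab by blast
    show "\<forall>x\<in>V - {b} - T. \<exists>u\<in>T. E x u"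
    proof
      fix x assume x: "x \<in> V - {b} - T"
      show "\<exists>u\<in>T. E x u"
      proof (cases "x \<in> V1")
        case True
        hence "x \<in> V - {a} - Sv a" using x unfolding T_def by blast
        then obtain u where u: "u \<in> Sv a" "E x u" using da unfolding dmv_iff by blast
        have "u \<in> V1"
        proof (rule ccontr)
          assume "u \<notin> V1"
          hence "u \<in> V2" using u Sa un by blast
          hence "x = a" using cr u True by blast
          thus False using x unfolding T_def by blast
        qed
        thus ?thesis using u unfolding T_def by blast
      next
        case False
        hence x2: "x \<in> V2" using x un by blast
        hence "x \<in> V - {b} - Sv b" using x unfolding T_def by blast
        then obtain u where u: "u \<in> Sv b" "E x u" using db unfolding dmv_iff by blast
        have "u \<in> V2"
        proof (rule ccontr)
          assume "u \<notin> V2"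
          hence "u \<in> V1" using u Sb un by blast
          hence "x = b" using cr u sym x2 by blast
          thus False using x by blast
        qed
        thus ?thesis using u unfolding T_def by blast
      qed
    qed
  qed
  have "T = Sv b" using Sv_eqI[OF bV dT] cT gv_all[OF bV] by simp
  thus ?thesis unfolding T_def by simp
qed

lemma part_Q:
  assumes un: "V1 \<union> V2 = V" and di: "V1 \<inter> V2 = {}" and a: "a \<in> V1" and b: "b \<in> V2"
    and cr: "\<forall>x y. E x y \<longrightarrow> x \<in> V1 \<longrightarrow> y \<in> V2 \<longrightarrow> x = a \<and> y = b"
  shows False
proof (cases "E a b")
  case True
  have bV: "b \<in> V" using b un by blast
  have "a \<in> Sv b" using part_P[OF un di a b cr] by blast
  thus False using A_nonadj[OF bV lemma1[OF bV]] True sym by blast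
next
  case False
  have nocr: "\<forall>x y. E x y \<longrightarrow> x \<in> V1 \<longrightarrow> y \<notin> V2" using cr False by blast
  have cr': "\<forall>x y. E x y \<longrightarrow> x \<in> V1 \<longrightarrow> y \<in> V2 \<longrightarrow> x = a' \<and> y = b'" for a' b'
    using nocr by blast
  have cr'': "\<forall>x y. E x y \<longrightarrow> x \<in> V2 \<longrightarrow> y \<in> V1 \<longrightarrow> x = a' \<and> y = b'" for a' b'
    using nocr sym by blast
  have un': "V2 \<union> V1 = V" and di': "V2 \<inter> V1 = {}" using un di by auto
  have bV: "b \<in> V" using b un by blast
  have sub: "V - {b} \<subseteq> Sv b"
  proof
    fix x assume x: "x \<in> V - {b}"
    show "x \<in> Sv b"
    proof (cases "x \<in> V1")
      case True
      thus ?thesis using part_P[OF un di True b cr'] by blast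
    next
      case False
      hence x2: "x \<in> V2" using x un by blast
      have e1: "Sv a = (Sv b \<inter> V2) \<union> (Sv a \<inter> V1) \<union> {b}" using part_P[OF un' di' b a cr''] .
      have e2: "Sv a = (Sv x \<inter> V2) \<union> (Sv a \<inter> V1) \<union> {x}" using part_P[OF un' di' x2 a cr''] .
      have "x \<in> Sv a" using e2 by blast
      thus ?thesis using e1 x x2 di by blast
    qed
  qed
  have "card (V - {b}) \<le> card (Sv b)" using sub Sv_fin[OF bV] by (rule card_mono[rotated])
  hence "card V - 1 \<le> g - 1" using Sv_card[OF bV] gv_all[OF bV] bV fin by simp
  hence gn: "card V \<le> g" using g_pos by linarith
  have "D = V" if D: "D \<in> GS" for D
  proof -
    have "D \<subseteq> V" using GS_sub[OF D] .
    moreover have "card V \<le> card D" using D gn by (simp add: GS_iff)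
    ultimately show ?thesis using fin by (metis card_seteq)
  qed
  thus False using GS_ne by blast
qed

lemma connected: "connected_graph V E"
  unfolding connected_graph_def
proof (intro conjI ballI)
  show "V \<noteq> {}" by (rule Vne)
  fix u w assume u: "u \<in> V" and w: "w \<in> V"
  let ?R = "\<lambda>x y. E x y \<and> x \<in> V \<and> y \<in> V"
  show "?R\<^sup>*\<^sup>* u w"
  proof (rule ccontr)
    assume nw: "\<not> ?R\<^sup>*\<^sup>* u w"
    define V1 where "V1 = {x \<in> V. ?R\<^sup>*\<^sup>* u x}"
    have "V1 \<union> (V - V1) = V" "V1 \<inter> (V - V1) = {}" unfolding V1_def by auto
    moreover have "u \<in> V1" unfolding V1_def using u by auto
    moreover have "w \<in> V - V1" unfolding V1_def using w nw by auto
    moreover have "\<forall>x y. E x y \<longrightarrow> x \<in> V1 \<longrightarrow> y \<in> V - V1 \<longrightarrow> x = u \<and> y = w"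
    proof (intro allI impI)
      fix x y assume "E x y" "x \<in> V1" "y \<in> V - V1"
      hence "?R\<^sup>*\<^sup>* u y" unfolding V1_def using inV1 inV2
        by (metis (mono_tags, lifting) mem_Collect_eq rtranclp.rtrancl_into_rtrancl)
      thus "x = u \<and> y = w" using \<open>y \<in> V - V1\<close> inV2 \<open>E x y\<close> unfolding V1_def by blast
    qed
    ultimately show False by (rule part_Q)
  qed
qed

lemma two_ec: "two_edge_connected V E"
  unfolding two_edge_connected_def
proof (intro conjI allI impI)
  show "connected_graph V E" by (rule connected)
  fix a b assume ab: "E a b"
  let ?E = "del_edge_E E a b"
  let ?R = "\<lambda>x y. ?E x y \<and> x \<in> V \<and> y \<in> V"
  show "connected_graph V ?E"
    unfolding connected_graph_def
  proof (intro conjI ballI)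
    show "V \<noteq> {}" by (rule Vne)
    fix u w assume u: "u \<in> V" and w: "w \<in> V"
    show "?R\<^sup>*\<^sup>* u w"
    proof (rule ccontr)
      assume nw: "\<not> ?R\<^sup>*\<^sup>* u w"
      define V1 where "V1 = {x \<in> V. ?R\<^sup>*\<^sup>* u x}"
      have un: "V1 \<union> (V - V1) = V" and di: "V1 \<inter> (V - V1) = {}" unfolding V1_def by auto
      have uV1: "u \<in> V1" unfolding V1_def using u by auto
      have wV2: "w \<in> V - V1" unfolding V1_def using w nw by auto
      have cr0: "{x, y} = {a, b}" if "E x y" "x \<in> V1" "y \<in> V - V1" for x y
      proof (rule ccontr)
        assume "{x, y} \<noteq> {a, b}"
        hence "?R x y" using that inV1 inV2 unfolding del_edge_E_def by blast
        hence "?R\<^sup>*\<^sup>* u y" using that unfolding V1_def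
          by (metis (mono_tags, lifting) mem_Collect_eq rtranclp.rtrancl_into_rtrancl)
        thus False using that inV2 unfolding V1_def by blast
      qed
      show False
      proof (cases "a \<in> V1 \<longleftrightarrow> b \<in> V1")
        case True
        have "\<forall>x y. E x y \<longrightarrow> x \<in> V1 \<longrightarrow> y \<in> V - V1 \<longrightarrow> x = u \<and> y = w"
        proof (intro allI impI)
          fix x y assume h: "E x y" "x \<in> V1" "y \<in> V - V1"
          have "{x, y} = {a, b}" using cr0[OF h] .
          hence "(x = a \<and> y = b) \<or> (x = b \<and> y = a)" by (metis doubleton_eq_iff)
          thus "x = u \<and> y = w" using h True by blast
        qed
        thus False using part_Q[OF un di uV1 wV2] by blast
      next
        case False
        show False
        proof (cases "a \<in> V1")
          case True
          have bV: "b \<in> V" using ab inV2 by blast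
          hence b2: "b \<in> V - V1" using False True by blast
          have "\<forall>x y. E x y \<longrightarrow> x \<in> V1 \<longrightarrow> y \<in> V - V1 \<longrightarrow> x = a \<and> y = b"
          proof (intro allI impI)
            fix x y assume h: "E x y" "x \<in> V1" "y \<in> V - V1"
            have "{x, y} = {a, b}" using cr0[OF h] .
            hence "(x = a \<and> y = b) \<or> (x = b \<and> y = a)" by (metis doubleton_eq_iff)
            thus "x = a \<and> y = b" using h b2 by blast
          qed
          thus False using part_Q[OF un di True b2] by blast
        next
          case a1: False
          have aV: "a \<in> V" using ab inV1 by blast
          hence a2: "a \<in> V - V1" using a1 by blast
          have b1: "b \<in> V1" using False a1 by blast
          have "\<forall>x y. E x y \<longrightarrow> x \<in> V1 \<longrightarrow> y \<in> V - V1 \<longrightarrow> x = b \<and> y = a"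
          proof (intro allI impI)
            fix x y assume h: "E x y" "x \<in> V1" "y \<in> V - V1"
            have "{x, y} = {a, b}" using cr0[OF h] .
            hence "(x = a \<and> y = b) \<or> (x = b \<and> y = a)" by (metis doubleton_eq_iff)
            thus "x = b \<and> y = a" using h a1 by blast
          qed
          thus False using part_Q[OF un di b1 a2] by blast
        qed
      qed
    qed
  qed
qed

end


definition path_E :: "nat \<Rightarrow> nat \<Rightarrow> nat \<Rightarrow> bool" where
  "path_E m i j \<longleftrightarrow> i < m \<and> j < m \<and> (j = Suc i \<or> i = Suc j)"

abbreviation "pdom m D \<equiv> dominating {0..<m} (path_E m) D"

lemma pdom_iff: "pdom m D \<longleftrightarrow> D \<subseteq> {0..<m} \<and> (\<forall>y<m. y \<notin> D \<longrightarrow> (Suc y \<in> D \<or> (0 < y \<and> y - 1 \<in> D)))"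
proof
  assume h: "pdom m D"
  hence sub: "D \<subseteq> {0..<m}" by (simp add: dominating_def)
  moreover have "\<forall>y<m. y \<notin> D \<longrightarrow> (Suc y \<in> D \<or> (0 < y \<and> y - 1 \<in> D))"
  proof (intro allI impI)
    fix y assume y: "y < m" "y \<notin> D"
    hence "y \<in> {0..<m} - D" by auto
    then obtain x where "x \<in> D" "path_E m y x" using h unfolding dominating_def by blast
    thus "Suc y \<in> D \<or> (0 < y \<and> y - 1 \<in> D)" by (auto simp: path_E_def)
  qed
  ultimately show "D \<subseteq> {0..<m} \<and> (\<forall>y<m. y \<notin> D \<longrightarrow> (Suc y \<in> D \<or> (0 < y \<and> y - 1 \<in> D)))" by blast
next
  assume h: "D \<subseteq> {0..<m} \<and> (\<forall>y<m. y \<notin> D \<longrightarrow> (Suc y \<in> D \<or> (0 < y \<and> y - 1 \<in> D)))"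
  show "pdom m D" unfolding dominating_def
  proof (intro conjI ballI)
    show "D \<subseteq> {0..<m}" using h by blast
    fix y assume y: "y \<in> {0..<m} - D"
    hence "Suc y \<in> D \<or> (0 < y \<and> y - 1 \<in> D)" using h by auto
    thus "\<exists>u\<in>D. path_E m y u"
    proof
      assume s: "Suc y \<in> D"
      hence "path_E m y (Suc y)" using h y by (auto simp: path_E_def)
      thus ?thesis using s by blast
    next
      assume "0 < y \<and> y - 1 \<in> D"
      moreover hence "path_E m y (y - 1)" using y by (auto simp: path_E_def)
      ultimately show ?thesis by blast
    qed
  qed
qed

lemma pdom_lower: assumes "pdom m D" shows "m \<le> 3 * card D"
proof -
  have sub: "D \<subseteq> {0..<m}" using assms by (simp add: pdom_iff)
  hence fD: "finite D" by (rule finite_subset) simp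
  have "{0..<m} \<subseteq> (\<Union>x\<in>D. {x - 1, x, Suc x})"
  proof
    fix y assume "y \<in> {0..<m}"
    hence "y \<in> D \<or> Suc y \<in> D \<or> (0 < y \<and> y - 1 \<in> D)" using assms by (auto simp: pdom_iff)
    thus "y \<in> (\<Union>x\<in>D. {x - 1, x, Suc x})"
    proof (elim disjE)
      assume "Suc y \<in> D" thus ?thesis by (intro UN_I[of "Suc y"]) auto
    next
      assume "0 < y \<and> y - 1 \<in> D" thus ?thesis by (intro UN_I[of "y - 1"]) auto
    qed auto
  qed
  hence "card {0..<m} \<le> card (\<Union>x\<in>D. {x - 1, x, Suc x})" by (intro card_mono) (auto simp: fD)
  also have "\<dots> \<le> (\<Sum>x\<in>D. card {x - 1, x, Suc x})" by (rule card_UN_le[OF fD])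
  also have "\<dots> \<le> (\<Sum>x\<in>D. 3)"
  proof (rule sum_mono)
    fix x show "card {x - 1, x, Suc x} \<le> 3" by (rule le_trans[OF card_insert_le_m1]) (auto simp: card_insert_le_m1)
  qed
  finally show ?thesis by simp
qed

definition TT :: "nat \<Rightarrow> nat set" where "TT k = (\<lambda>j. 3 * j + 1) ` {0..<k}"

lemma TT_mem: "x \<in> TT k \<longleftrightarrow> (\<exists>j<k. x = 3 * j + 1)"
  unfolding TT_def by auto

lemma TT_lt: "x \<in> TT k \<Longrightarrow> x < 3 * k" unfolding TT_mem by auto

lemma not_TT: "0 < k \<Longrightarrow> 3 * k - 1 \<notin> TT k"
  unfolding TT_mem by presburger

lemma TT_card: "card (TT k) = k"
  unfolding TT_def by (subst card_image) (auto simp: inj_on_def)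

lemma TT_fin: "finite (TT k)" unfolding TT_def by simp

lemma TT_dom_part: "y < 3 * k \<Longrightarrow> y \<notin> TT k \<Longrightarrow> Suc y \<in> TT k \<or> (0 < y \<and> y - 1 \<in> TT k)"
  unfolding TT_mem by presburger

lemma TT_dom: "pdom (3 * k) (TT k)"
  unfolding pdom_iff using TT_dom_part TT_lt by auto

lemma uniq_path: "pdom (3 * k) D \<Longrightarrow> card D \<le> k \<Longrightarrow> D = TT k"
proof (induction k arbitrary: D)
  case 0
  thus ?case unfolding dominating_def TT_def by auto
next
  case (Suc k)
  have e3: "3 * Suc k = 3 * k + 3" by simp
  have dom: "pdom (3 * k + 3) D" using Suc.prems(1) unfolding e3 .
  have sub: "D \<subseteq> {0..<3 * k + 3}" using dom by (simp add: pdom_iff)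
  have fD: "finite D" using sub finite_subset by blast
  have dm: "\<And>y. y < 3 * k + 3 \<Longrightarrow> y \<notin> D \<Longrightarrow> Suc y \<in> D \<or> (0 < y \<and> y - 1 \<in> D)"
    using dom by (simp add: pdom_iff)
  define D0 where "D0 = D \<inter> {0..<3 * k}"
  define D1 where "D1 = D \<inter> {3 * k..<3 * k + 3}"
  have DU: "D = D0 \<union> D1" unfolding D0_def D1_def using sub by auto
  have cD: "card D = card D0 + card D1" unfolding DU
    by (rule card_Un_disjoint) (auto simp: D0_def D1_def fD)
  have last: "3 * k + 1 \<in> D \<or> 3 * k + 2 \<in> D"
  proof (rule ccontr)
    assume "\<not> ?thesis"
    hence "3 * k + 2 \<notin> D" by blast
    from dm[OF _ this] \<open>\<not> ?thesis\<close> sub show False by auto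
  qed
  show ?case
  proof (cases "3 * k \<in> D")
    case False
    have d0: "pdom (3 * k) D0" unfolding pdom_iff
    proof (intro conjI allI impI)
      show "D0 \<subseteq> {0..<3 * k}" unfolding D0_def by blast
      fix y assume y: "y < 3 * k" "y \<notin> D0"
      hence "y \<notin> D" unfolding D0_def by auto
      hence "Suc y \<in> D \<or> (0 < y \<and> y - 1 \<in> D)" using dm y by auto
      moreover have "Suc y < 3 * k \<or> Suc y \<notin> D" using False y by (cases "Suc y = 3 * k") auto
      ultimately show "Suc y \<in> D0 \<or> (0 < y \<and> y - 1 \<in> D0)" using y unfolding D0_def by auto
    qed
    have "D1 \<noteq> {}" using last unfolding D1_def by auto
    hence "card D1 \<ge> 1" unfolding D1_def by (simp add: Suc_leI card_gt_0_iff)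
    hence "card D0 \<le> k" using cD Suc.prems(2) by simp
    hence D0T: "D0 = TT k" using Suc.IH[OF d0] by simp
    hence c1: "card D1 \<le> 1" using cD Suc.prems(2) TT_card by simp
    have "3 * k + 1 \<in> D"
    proof (rule ccontr)
      assume n: "3 * k + 1 \<notin> D"
      have h: "Suc (3 * k) \<in> D \<or> (0 < 3 * k \<and> 3 * k - 1 \<in> D)" using dm[of "3 * k"] False by simp
      have h2: "0 < 3 * k \<and> 3 * k - 1 \<in> D" using h n by simp
      hence "3 * k - 1 \<in> D0" unfolding D0_def by simp
      hence "3 * k - 1 \<in> TT k" using D0T by simp
      moreover have "0 < k" using h2 by simp
      ultimately show False using not_TT by blast
    qed
    hence "3 * k + 1 \<in> D1" unfolding D1_def by auto
    moreover have "\<forall>a\<in>D1. \<forall>b\<in>D1. a = b" using c1 card_le_Suc0_iff_eq[of D1] unfolding D1_def by simp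
    ultimately have "D1 = {3 * k + 1}" by blast
    hence "D = TT k \<union> {3 * k + 1}" using DU D0T by simp
    also have "\<dots> = TT (Suc k)" by (simp add: TT_def atLeast0_lessThan_Suc)
    finally show ?thesis .
  next
    case True
    obtain z where z: "z = 3 * k + 1 \<or> z = 3 * k + 2" "z \<in> D" using last by blast
    have "{3 * k, z} \<subseteq> D1" using True z unfolding D1_def by auto
    hence "card {3 * k, z} \<le> card D1" by (intro card_mono) (auto simp: D1_def)
    moreover have "card {3 * k, z} = 2" using z(1) by auto
    ultimately have "card D1 \<ge> 2" by simp
    hence c0: "card D0 + 1 \<le> k" using cD Suc.prems(2) by simp
    show ?thesis
    proof (cases k)
      case 0 thus ?thesis using c0 by simp
    next
      case (Suc k')
      define D0' where "D0' = insert (3 * k - 1) D0"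
      have d0: "pdom (3 * k) D0'" unfolding pdom_iff
      proof (intro conjI allI impI)
        show "D0' \<subseteq> {0..<3 * k}" unfolding D0'_def D0_def using Suc by auto
        fix y assume y: "y < 3 * k" "y \<notin> D0'"
        hence yn: "y \<notin> D" "y \<noteq> 3 * k - 1" unfolding D0'_def D0_def by auto
        hence "Suc y \<in> D \<or> (0 < y \<and> y - 1 \<in> D)" using dm y by auto
        moreover have "Suc y < 3 * k" using y yn by auto
        ultimately show "Suc y \<in> D0' \<or> (0 < y \<and> y - 1 \<in> D0')" using y unfolding D0'_def D0_def by auto
      qed
      have "card D0' \<le> card D0 + 1" unfolding D0'_def by (simp add: card_insert_le_m1)
      hence "D0' = TT k" using Suc.IH[OF d0] c0 by simp
      hence "3 * k - 1 \<in> TT k" unfolding D0'_def by blast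
      thus ?thesis using not_TT[of k] Suc by simp
    qed
  qed
qed

lemma path_fin_doms: "finite {D. pdom m D}" by (rule finite_doms) simp

lemma path3k: "card (gamma_sets {0..<3 * k} (path_E (3 * k))) = 1"
proof -
  have gl: "gamma {0..<3 * k} (path_E (3 * k)) \<le> k" using gamma_le[OF _ TT_dom] TT_card by simp
  have "gamma_sets {0..<3 * k} (path_E (3 * k)) = {TT k}"
  proof
    show "gamma_sets {0..<3 * k} (path_E (3 * k)) \<subseteq> {TT k}"
      using uniq_path gl by (auto simp: gamma_sets_def)
    obtain D where D: "pdom (3 * k) D" "card D = gamma {0..<3 * k} (path_E (3 * k))"
      using gamma_ex[of "{0..<3 * k}"] by auto
    hence "D = TT k" using uniq_path gl by simp
    thus "{TT k} \<subseteq> gamma_sets {0..<3 * k} (path_E (3 * k))" using D by (simp add: gamma_sets_def)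
  qed
  thus ?thesis by simp
qed

lemma two_gsets:
  assumes "pdom m D1" "pdom m D2" "D1 \<noteq> D2" "card D1 = c" "card D2 = c" "m + 2 \<ge> 3 * c"
  shows "card (gamma_sets {0..<m} (path_E m)) \<noteq> 1"
proof -
  have "\<forall>D. pdom m D \<longrightarrow> c \<le> card D" using pdom_lower assms(6) by fastforce
  hence ge: "c \<le> gamma {0..<m} (path_E m)" using gamma_ex[of "{0..<m}" "path_E m"] by force
  have le: "gamma {0..<m} (path_E m) \<le> c" using gamma_le[OF _ assms(1)] assms(4) by simp
  have "D1 \<in> gamma_sets {0..<m} (path_E m)" "D2 \<in> gamma_sets {0..<m} (path_E m)"
    using assms ge le by (auto simp: gamma_sets_def)
  moreover have "finite (gamma_sets {0..<m} (path_E m))"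
    by (rule finite_subset[OF _ path_fin_doms]) (auto simp: gamma_sets_def)
  ultimately show ?thesis using assms(3) by (metis card_1_singletonE singletonD)
qed


lemma TT_ext: "y < 3 * k \<Longrightarrow> y \<notin> insert z (TT k) \<Longrightarrow>
   Suc y \<in> insert z (TT k) \<or> (0 < y \<and> y - 1 \<in> insert z (TT k))"
  using TT_dom_part[of y k] by blast

lemma path_not3:
  assumes "m mod 3 \<noteq> 0" "m \<ge> 2"
  shows "card (gamma_sets {0..<m} (path_E m)) \<noteq> 1"
proof -
  define k where "k = m div 3"
  define r where "r = m mod 3"
  have mr: "m = 3 * k + r" "r < 3" "r \<noteq> 0" unfolding k_def r_def using assms by simp_all
  show ?thesis
  proof (cases "r = 1")
  case True
  have m: "m = 3 * k + 1" "k \<ge> 1" using True mr assms by linarith+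
  let ?D1 = "insert (3 * k) (TT k)" and ?D2 = "insert (3 * k - 1) (TT k)"
  have n1: "3 * k \<notin> TT k" using TT_lt by blast
  have n2: "3 * k - 1 \<notin> TT k" using not_TT m(2) by simp
  have sT: "TT k \<subseteq> {0..<m}" using m TT_lt by fastforce
  have d1: "pdom m ?D1" unfolding pdom_iff
  proof (intro conjI allI impI)
    show "?D1 \<subseteq> {0..<m}" using sT m by auto
    fix y assume y: "y < m" "y \<notin> ?D1"
    show "Suc y \<in> ?D1 \<or> (0 < y \<and> y - 1 \<in> ?D1)"
    proof (cases "y < 3 * k")
      case True thus ?thesis using TT_ext y by blast
    next
      case False hence "y = 3 * k" using y m by simp
      thus ?thesis using y by simp
    qed
  qed
  have d2: "pdom m ?D2" unfolding pdom_iff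
  proof (intro conjI allI impI)
    show "?D2 \<subseteq> {0..<m}" using sT m by auto
    fix y assume y: "y < m" "y \<notin> ?D2"
    show "Suc y \<in> ?D2 \<or> (0 < y \<and> y - 1 \<in> ?D2)"
    proof (cases "y < 3 * k")
      case True thus ?thesis using TT_ext y by blast
    next
      case False hence "y = 3 * k" using y m by simp
      thus ?thesis using m by simp
    qed
  qed
  have ne: "?D1 \<noteq> ?D2"
  proof
    assume "?D1 = ?D2"
    hence "3 * k \<in> ?D2" by blast
    thus False using n1 m(2) by simp
  qed
  show ?thesis
    by (rule two_gsets[OF d1 d2 ne, of "k + 1"]) (use n1 n2 m TT_card TT_fin in auto)
next
  case False
  have m: "m = 3 * k + 2" using mr False by linarith
  let ?D1 = "insert (3 * k) (TT k)" and ?D2 = "insert (3 * k + 1) (TT k)"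
  have n1: "3 * k \<notin> TT k" and n2: "3 * k + 1 \<notin> TT k" using TT_lt by force+
  have sT: "TT k \<subseteq> {0..<m}" using m TT_lt by fastforce
  have d1: "pdom m ?D1" unfolding pdom_iff
  proof (intro conjI allI impI)
    show "?D1 \<subseteq> {0..<m}" using sT m by auto
    fix y assume y: "y < m" "y \<notin> ?D1"
    show "Suc y \<in> ?D1 \<or> (0 < y \<and> y - 1 \<in> ?D1)"
    proof (cases "y < 3 * k")
      case True thus ?thesis using TT_ext y by blast
    next
      case False hence "y = 3 * k + 1" using y m by auto
      thus ?thesis using y by simp
    qed
  qed
  have d2: "pdom m ?D2" unfolding pdom_iff
  proof (intro conjI allI impI)
    show "?D2 \<subseteq> {0..<m}" using sT m by auto
    fix y assume y: "y < m" "y \<notin> ?D2"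
    show "Suc y \<in> ?D2 \<or> (0 < y \<and> y - 1 \<in> ?D2)"
    proof (cases "y < 3 * k")
      case True thus ?thesis using TT_ext y by blast
    next
      case False hence "y = 3 * k" using y m by auto
      thus ?thesis using y by simp
    qed
  qed
  have ne: "?D1 \<noteq> ?D2"
  proof
    assume "?D1 = ?D2"
    hence "3 * k \<in> ?D2" by blast
    thus False using n1 by simp
  qed
  show ?thesis
    by (rule two_gsets[OF d1 d2 ne, of "k + 1"]) (use n1 n2 m TT_card TT_fin in auto)
qed
qed



lemma dom_iso:
  assumes bij: "bij_betw f V W" and iso: "\<forall>x\<in>V. \<forall>y\<in>V. E x y \<longleftrightarrow> E' (f x) (f y)"
    and D: "D \<subseteq> V"
  shows "dominating W E' (f ` D) \<longleftrightarrow> dominating V E D"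
proof -
  have inj: "inj_on f V" and W: "f ` V = W" using bij by (auto simp: bij_betw_def)
  show ?thesis unfolding dominating_def
  proof
    assume h: "f ` D \<subseteq> W \<and> (\<forall>v\<in>W - f ` D. \<exists>u\<in>f ` D. E' v u)"
    show "D \<subseteq> V \<and> (\<forall>v\<in>V - D. \<exists>u\<in>D. E v u)"
    proof (intro conjI ballI)
      show "D \<subseteq> V" by (rule D)
      fix x assume x: "x \<in> V - D"
      hence "f x \<in> W - f ` D" using W inj D by (auto dest: inj_onD)
      then obtain u where u: "u \<in> D" "E' (f x) (f u)" using h by blast
      thus "\<exists>u\<in>D. E x u" using iso x D by blast
    qed
  next
    assume h: "D \<subseteq> V \<and> (\<forall>v\<in>V - D. \<exists>u\<in>D. E v u)"
    show "f ` D \<subseteq> W \<and> (\<forall>v\<in>W - f ` D. \<exists>u\<in>f ` D. E' v u)"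
    proof (intro conjI ballI)
      show "f ` D \<subseteq> W" using W D by blast
      fix w assume w: "w \<in> W - f ` D"
      then obtain x where x: "x \<in> V" "w = f x" using W by blast
      hence "x \<in> V - D" using w by blast
      then obtain u where "u \<in> D" "E x u" using h by blast
      thus "\<exists>u\<in>f ` D. E' w u" using iso x D by blast
    qed
  qed
qed

lemma doms_iso:
  assumes bij: "bij_betw f V W" and iso: "\<forall>x\<in>V. \<forall>y\<in>V. E x y \<longleftrightarrow> E' (f x) (f y)"
  shows "{D'. dominating W E' D'} = (image f) ` {D. dominating V E D}"
proof
  have inj: "inj_on f V" and W: "f ` V = W" using bij by (auto simp: bij_betw_def)
  show "{D'. dominating W E' D'} \<subseteq> (image f) ` {D. dominating V E D}"
  proof
    fix D' assume "D' \<in> {D'. dominating W E' D'}"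
    hence d: "dominating W E' D'" by simp
    hence sub: "D' \<subseteq> W" by (simp add: dominating_def)
    define D where "D = V \<inter> f -` D'"
    have eq: "f ` D = D'" unfolding D_def using sub W by blast
    have "dominating V E D" using dom_iso[OF bij iso, of D] d eq unfolding D_def by simp
    thus "D' \<in> (image f) ` {D. dominating V E D}" using eq by blast
  qed
  show "(image f) ` {D. dominating V E D} \<subseteq> {D'. dominating W E' D'}"
  proof
    fix D' assume "D' \<in> (image f) ` {D. dominating V E D}"
    then obtain D where D: "dominating V E D" "D' = f ` D" by blast
    hence "D \<subseteq> V" by (simp add: dominating_def)
    thus "D' \<in> {D'. dominating W E' D'}" using dom_iso[OF bij iso] D by simp
  qed
qed

lemma card_iso: "bij_betw f V W \<Longrightarrow> D \<subseteq> V \<Longrightarrow> card (f ` D) = card D"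
  by (meson bij_betw_def card_image inj_on_subset)

lemma gamma_iso:
  assumes bij: "bij_betw f V W" and iso: "\<forall>x\<in>V. \<forall>y\<in>V. E x y \<longleftrightarrow> E' (f x) (f y)"
  shows "gamma W E' = gamma V E"
proof -
  have "card ` {D'. dominating W E' D'} = card ` {D. dominating V E D}"
    unfolding doms_iso[OF bij iso] image_image
    using card_iso[OF bij] by (intro image_cong) (auto simp: dominating_def)
  thus ?thesis by (simp add: gamma_def)
qed

lemma gsets_img:
  assumes bij: "bij_betw f V W" and iso: "\<forall>x\<in>V. \<forall>y\<in>V. E x y \<longleftrightarrow> E' (f x) (f y)"
  shows "gamma_sets W E' = (image f) ` gamma_sets V E"
proof -
  have "gamma_sets W E' = {D' \<in> {D'. dominating W E' D'}. card D' = gamma V E}"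
    by (auto simp: gamma_sets_def gamma_iso[OF bij iso])
  also have "\<dots> = (image f) ` gamma_sets V E"
    unfolding doms_iso[OF bij iso] gamma_sets_def
    using card_iso[OF bij] by (auto simp: dominating_def)
  finally show ?thesis .
qed

lemma gsets_iso:
  assumes bij: "bij_betw f V W" and iso: "\<forall>x\<in>V. \<forall>y\<in>V. E x y \<longleftrightarrow> E' (f x) (f y)"
  shows "card (gamma_sets W E') = card (gamma_sets V E)"
proof -
  have "gamma_sets W E' = (image f) ` gamma_sets V E" by (rule gsets_img[OF bij iso])
  moreover have "inj_on (image f) (gamma_sets V E)"
    by (rule inj_on_subset[OF inj_on_image_Pow[of f V]])
       (use bij in \<open>auto simp: bij_betw_def gamma_sets_def dominating_def\<close>)
  ultimately show ?thesis by (simp add: card_image)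
qed

lemma del_iso:
  assumes bij: "bij_betw f V W" and iso: "\<forall>x\<in>V. \<forall>y\<in>V. E x y \<longleftrightarrow> E' (f x) (f y)"
    and v: "v \<in> V"
  shows "card (gamma_sets (W - {f v}) (del_vertex_E E' (f v))) =
             card (gamma_sets (V - {v}) (del_vertex_E E v))"
proof (rule gsets_iso)
  have inj: "inj_on f V" and W: "f ` V = W" using bij by (auto simp: bij_betw_def)
  have "f ` (V - {v}) = W - {f v}" using inj W v by (auto dest: inj_onD)
  thus "bij_betw f (V - {v}) (W - {f v})"
    using inj by (metis Diff_subset bij_betw_imageI inj_on_subset)
  show "\<forall>x\<in>V - {v}. \<forall>y\<in>V - {v}. del_vertex_E E v x y \<longleftrightarrow> del_vertex_E E' (f v) (f x) (f y)"
    using iso inj v by (auto simp: del_vertex_E_def dest: inj_onD)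
qed

lemma hud_iso:
  assumes bij: "bij_betw f V W" and iso: "\<forall>x\<in>V. \<forall>y\<in>V. E x y \<longleftrightarrow> E' (f x) (f y)"
  shows "hypo_unique_domination V E \<longleftrightarrow> hypo_unique_domination W E'"
proof -
  have inj: "inj_on f V" and W: "f ` V = W" using bij by (auto simp: bij_betw_def)
  have del: "card (gamma_sets (W - {f v}) (del_vertex_E E' (f v))) =
             card (gamma_sets (V - {v}) (del_vertex_E E v))" if v: "v \<in> V" for v
  proof (rule gsets_iso)
    have "f ` (V - {v}) = W - {f v}" using inj W v by (auto dest: inj_onD)
    thus "bij_betw f (V - {v}) (W - {f v})"
      using inj by (metis Diff_subset bij_betw_imageI inj_on_subset)
    show "\<forall>x\<in>V - {v}. \<forall>y\<in>V - {v}. del_vertex_E E v x y \<longleftrightarrow> del_vertex_E E' (f v) (f x) (f y)"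
      using iso inj v by (auto simp: del_vertex_E_def dest: inj_onD)
  qed
  show ?thesis unfolding hypo_unique_domination_def gsets_iso[OF bij iso]
    using del W by auto
qed



definition rot :: "nat \<Rightarrow> nat \<Rightarrow> nat \<Rightarrow> nat" where "rot n c i = (i + c) mod n"

lemma rot_lt: "0 < n \<Longrightarrow> rot n c i < n" by (simp add: rot_def)

lemma rot_inv: "i < n \<Longrightarrow> c < n \<Longrightarrow> rot n (n - c) (rot n c i) = i"
proof -
  assume a: "i < n" "c < n"
  have "rot n (n - c) (rot n c i) = ((i + c) mod n + (n - c)) mod n" by (simp add: rot_def)
  also have "\<dots> = (i + c + (n - c)) mod n" by (simp add: mod_add_left_eq)
  also have "i + c + (n - c) = i + n" using a by simp
  finally show ?thesis using a by simp
qed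

lemma rot_succ: "rot n c ((a + 1) mod n) = (rot n c a + 1) mod n"
  unfolding rot_def by (simp add: mod_simps ac_simps)

lemma rot_iso:
  assumes n: "0 < n" and c: "c < n" and i: "i < n" and j: "j < n"
  shows "cycle_graph_E n i j \<longleftrightarrow> cycle_graph_E n (rot n c i) (rot n c j)"
proof -
  have inv: "\<And>x. x < n \<Longrightarrow> rot n (n - c) (rot n c x) = x" using rot_inv c by blast
  have s1: "b = (a + 1) mod n \<longleftrightarrow> rot n c b = (rot n c a + 1) mod n" if "a < n" "b < n" for a b
  proof
    assume "b = (a + 1) mod n" thus "rot n c b = (rot n c a + 1) mod n" using rot_succ by simp
  next
    assume h: "rot n c b = (rot n c a + 1) mod n"
    have "b = rot n (n - c) (rot n c b)" using inv that by simp
    also have "\<dots> = (rot n (n - c) (rot n c a) + 1) mod n" using h rot_succ by simp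
    also have "\<dots> = (a + 1) mod n" using inv that by simp
    finally show "b = (a + 1) mod n" .
  qed
  have ne: "i \<noteq> j \<longleftrightarrow> rot n c i \<noteq> rot n c j" using inv i j by metis
  show ?thesis unfolding cycle_graph_E_def using s1[OF i j] s1[OF j i] ne i j rot_lt[OF n] by blast
qed

lemma rot_iso_all: "0 < n \<Longrightarrow> c < n \<Longrightarrow>
  \<forall>x\<in>{0..<n}. \<forall>y\<in>{0..<n}. cycle_graph_E n x y \<longleftrightarrow> cycle_graph_E n (rot n c x) (rot n c y)"
proof (intro ballI)
  fix x y assume "0 < n" "c < n" "x \<in> {0..<n}" "y \<in> {0..<n}"
  thus "cycle_graph_E n x y \<longleftrightarrow> cycle_graph_E n (rot n c x) (rot n c y)" by (intro rot_iso) auto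
qed

lemma rot_bij: assumes n: "0 < n" and c: "c < n" shows "bij_betw (rot n c) {0..<n} {0..<n}"
proof -
  have inj: "inj_on (rot n c) {0..<n}"
    by (rule inj_on_inverseI[of _ "rot n (n - c)"]) (use rot_inv c in auto)
  have "rot n c ` {0..<n} = {0..<n}" by (rule endo_inj_surj) (use inj rot_lt n in auto)
  thus ?thesis using inj by (simp add: bij_betw_def)
qed

lemma cyc_del_last:
  assumes n: "n \<ge> 3"
  shows "gamma_sets ({0..<n} - {n - 1}) (del_vertex_E (cycle_graph_E n) (n - 1))
       = gamma_sets {0..<n - 1} (path_E (n - 1))"
proof -
  have "{0..<n} - {n - 1} = {0..<n - 1}" using n by auto
  moreover have "del_vertex_E (cycle_graph_E n) (n - 1) = path_E (n - 1)"
  proof (intro ext)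
    fix i j
    show "del_vertex_E (cycle_graph_E n) (n - 1) i j = path_E (n - 1) i j"
    proof (cases "i < n - 1 \<and> j < n - 1")
      case True
      hence "(i + 1) mod n = i + 1" "(j + 1) mod n = j + 1" by auto
      thus ?thesis using True by (auto simp: del_vertex_E_def cycle_graph_E_def path_E_def)
    next
      case False
      thus ?thesis by (auto simp: del_vertex_E_def cycle_graph_E_def path_E_def)
    qed
  qed
  ultimately show ?thesis by simp
qed

lemma cyc_del_all:
  assumes n: "n \<ge> 3" and v: "v < n"
  shows "card (gamma_sets ({0..<n} - {v}) (del_vertex_E (cycle_graph_E n) v))
       = card (gamma_sets {0..<n - 1} (path_E (n - 1)))"
proof -
  define c where "c = n - 1 - v"
  have c: "c < n" using n unfolding c_def by simp
  have rv: "rot n c v = n - 1" unfolding rot_def c_def using v n by simp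
  have "card (gamma_sets ({0..<n} - {rot n c v}) (del_vertex_E (cycle_graph_E n) (rot n c v))) =
        card (gamma_sets ({0..<n} - {v}) (del_vertex_E (cycle_graph_E n) v))"
    by (rule del_iso[OF rot_bij rot_iso_all]) (use n c v in auto)
  thus ?thesis using cyc_del_last[OF n] rv by simp
qed

lemma cyc_gs2:
  assumes n: "n \<ge> 3"
  shows "card (gamma_sets {0..<n} (cycle_graph_E n)) \<ge> 2"
proof -
  let ?G = "gamma_sets {0..<n} (cycle_graph_E n)"
  have fin: "finite ?G"
    by (rule finite_subset[OF _ finite_doms[of "{0..<n}" "cycle_graph_E n"]]) (auto simp: gamma_sets_def)
  obtain D where D: "dominating {0..<n} (cycle_graph_E n) D" "card D = gamma {0..<n} (cycle_graph_E n)"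
    using gamma_ex[of "{0..<n}" "cycle_graph_E n"] by auto
  hence DG: "D \<in> ?G" by (simp add: gamma_sets_def)
  have sub: "D \<subseteq> {0..<n}" using D by (simp add: dominating_def)
  have bij1: "bij_betw (rot n 1) {0..<n} {0..<n}" using rot_bij n by simp
  have iso1: "\<forall>x\<in>{0..<n}. \<forall>y\<in>{0..<n}. cycle_graph_E n x y \<longleftrightarrow> cycle_graph_E n (rot n 1 x) (rot n 1 y)"
    using rot_iso_all[of n 1] n by simp
  have RG: "rot n 1 ` D \<in> ?G" using gsets_img[OF bij1 iso1] DG by blast
  show ?thesis
  proof (cases "rot n 1 ` D = D")
    case False
    have "{D, rot n 1 ` D} \<subseteq> ?G" using DG RG by blast
    hence "card {D, rot n 1 ` D} \<le> card ?G" using fin by (rule card_mono[rotated])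
    thus ?thesis using False by simp
  next
    case True
    have z: "(0::nat) \<in> {0..<n}" using n by simp
    have Dne: "D \<noteq> {}" using D(1) z unfolding dominating_def by blast
    then obtain x where x: "x \<in> D" by blast
    have step: "(y + 1) mod n \<in> D" if "y \<in> D" for y
      using True that by (metis image_eqI rot_def)
    have it: "(x + j) mod n \<in> D" for j
    proof (induction j)
      case 0 thus ?case using x sub by auto
    next
      case (Suc j)
      from step[OF Suc] show ?case by (simp add: mod_simps)
    qed
    have all: "D = {0..<n}"
    proof
      show "{0..<n} \<subseteq> D"
      proof
        fix y assume y: "y \<in> {0..<n}"
        have xn: "x < n" using x sub by auto
        have "(x + (y + n - x)) mod n = y" using y xn by simp
        thus "y \<in> D" using it[of "y + n - x"] by simp
      qed
    qed (rule sub)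
    have d2: "dominating {0..<n} (cycle_graph_E n) {1..<n}"
      unfolding dominating_def
    proof (intro conjI ballI)
      fix v assume "v \<in> {0..<n} - {1..<n}"
      hence v0: "v = 0" by auto
      have "cycle_graph_E n 0 1" unfolding cycle_graph_E_def using n by auto
      moreover have "(1::nat) \<in> {1..<n}" using n by auto
      ultimately show "\<exists>u\<in>{1..<n}. cycle_graph_E n v u" using v0 by blast
    qed auto
    have "gamma {0..<n} (cycle_graph_E n) \<le> card {1..<n}" by (rule gamma_le[OF _ d2]) simp
    thus ?thesis using D(2) all n by simp
  qed
qed

lemma cyc_hud:
  assumes n: "n \<ge> 3"
  shows "hypo_unique_domination {0..<n} (cycle_graph_E n) \<longleftrightarrow> (n - 1) mod 3 = 0"
proof -
  have "hypo_unique_domination {0..<n} (cycle_graph_E n) \<longleftrightarrow>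
        card (gamma_sets {0..<n - 1} (path_E (n - 1))) = 1"
  proof -
    have "(\<forall>v\<in>{0..<n}. card (gamma_sets ({0..<n} - {v}) (del_vertex_E (cycle_graph_E n) v)) = 1)
          \<longleftrightarrow> card (gamma_sets {0..<n - 1} (path_E (n - 1))) = 1"
    proof
      assume "\<forall>v\<in>{0..<n}. card (gamma_sets ({0..<n} - {v}) (del_vertex_E (cycle_graph_E n) v)) = 1"
      thus "card (gamma_sets {0..<n - 1} (path_E (n - 1))) = 1" using cyc_del_all[OF n, of 0] n by simp
    qed (use cyc_del_all[OF n] in simp)
    thus ?thesis unfolding hypo_unique_domination_def using cyc_gs2[OF n] by simp
  qed
  also have "\<dots> \<longleftrightarrow> (n - 1) mod 3 = 0"
  proof
    assume "card (gamma_sets {0..<n - 1} (path_E (n - 1))) = 1"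
    thus "(n - 1) mod 3 = 0" using path_not3[of "n - 1"] n by fastforce
  next
    assume "(n - 1) mod 3 = 0"
    then obtain k where "n - 1 = 3 * k" by blast
    thus "card (gamma_sets {0..<n - 1} (path_E (n - 1))) = 1" using path3k by simp
  qed
  finally show ?thesis .
qed



lemma path_ex:
  assumes "R\<^sup>*\<^sup>* x y"
  shows "\<exists>ps. ps \<noteq> [] \<and> hd ps = x \<and> last ps = y \<and> distinct ps \<and> successively R ps"
  using assms
proof (induction rule: converse_rtranclp_induct)
  case base
  show ?case by (intro exI[of _ "[y]"]) auto
next
  case (step x z)
  then obtain ps where ps: "ps \<noteq> []" "hd ps = z" "last ps = y" "distinct ps" "successively R ps" by blast
  show ?case
  proof (cases "x \<in> set ps")
    case True
    then obtain us ws where uw: "ps = us @ x # ws" by (meson split_list)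
    show ?thesis
    proof (intro exI[of _ "x # ws"] conjI)
      show "last (x # ws) = y" using ps(3) uw by simp
      show "distinct (x # ws)" using ps(4) uw by simp
      show "successively R (x # ws)" using ps(5) uw by (simp add: successively_append_iff)
    qed auto
  next
    case False
    show ?thesis
    proof (intro exI[of _ "x # ps"] conjI)
      show "last (x # ps) = y" using ps by simp
      show "distinct (x # ps)" using ps False by simp
      show "successively R (x # ps)" using ps step.hyps(1) by (simp add: successively_Cons)
    qed auto
  qed
qed

lemma edge_on_cycle:
  assumes sg: "simple_graph V E" and tec: "two_edge_connected V E" and ab: "E a b"
  shows "\<exists>ys. is_cycle V E ys \<and> {a, b} \<in> cycle_edges ys"
proof -
  have sym: "\<And>x y. E x y \<Longrightarrow> E y x" and irr: "\<And>x. \<not> E x x"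
    and inV: "\<And>x y. E x y \<Longrightarrow> x \<in> V \<and> y \<in> V" using sg by (auto simp: simple_graph_def)
  let ?R = "\<lambda>x y. del_edge_E E a b x y \<and> x \<in> V \<and> y \<in> V"
  have "connected_graph V (del_edge_E E a b)" using tec ab by (simp add: two_edge_connected_def)
  hence allc: "\<forall>u\<in>V. \<forall>w\<in>V. ?R\<^sup>*\<^sup>* u w" unfolding connected_graph_def by (rule conjunct2)
  have "?R\<^sup>*\<^sup>* b a" using allc inV[OF ab] by blast
  from path_ex[OF this] obtain ps where ps: "ps \<noteq> []" "hd ps = b" "last ps = a" "distinct ps" "successively ?R ps"
    by blast
  define n where "n = length ps"
  have hd0: "ps ! 0 = b" using ps hd_conv_nth by metis
  have lastn: "ps ! (n - 1) = a" using ps last_conv_nth unfolding n_def by metis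
  have ba: "b \<noteq> a" using ab irr by blast
  have n2: "n \<ge> 2"
  proof (rule ccontr)
    assume "\<not> n \<ge> 2"
    moreover have "n \<noteq> 0" using ps(1) unfolding n_def by simp
    ultimately have "n = 1" by linarith
    thus False using hd0 lastn ba by simp
  qed
  have succ: "\<And>i. Suc i < n \<Longrightarrow> ?R (ps ! i) (ps ! Suc i)"
    using successively_nth[OF ps(5)] unfolding n_def by blast
  have n3: "n \<ge> 3"
  proof (rule ccontr)
    assume "\<not> n \<ge> 3"
    hence "n = 2" using n2 by simp
    hence "?R (ps ! 0) (ps ! 1)" using succ[of 0] by simp
    moreover have "ps ! 1 = a" using lastn \<open>n = 2\<close> by simp
    moreover have "{b, a} = {a, b}" by blast
    ultimately show False using hd0 unfolding del_edge_E_def by simp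
  qed
  have adj: "E (ps ! i) (ps ! ((i + 1) mod n))" if i: "i < n" for i
  proof (cases "Suc i < n")
    case True
    thus ?thesis using succ[OF True] by (simp add: del_edge_E_def)
  next
    case False
    hence "i = n - 1" using i by simp
    moreover hence "(i + 1) mod n = 0" using n2 by simp
    ultimately show ?thesis using lastn hd0 ab by simp
  qed
  have setV: "set ps \<subseteq> V"
  proof
    fix x assume "x \<in> set ps"
    then obtain i where i: "i < n" "x = ps ! i" unfolding n_def by (metis in_set_conv_nth)
    thus "x \<in> V" using adj[OF i(1)] inV by blast
  qed
  have cyc: "is_cycle V E ps" unfolding is_cycle_def n_def[symmetric] using ps(4) n3 setV adj by blast
  have "{a, b} = {ps ! (n - 1), ps ! ((n - 1 + 1) mod n)}" using lastn hd0 n2 by simp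
  moreover have "n - 1 < length ps" using n2 unfolding n_def by simp
  moreover have ce: "cycle_edges ps = {{ps ! i, ps ! ((i + 1) mod n)} | i. i < n}"
    unfolding cycle_edges_def n_def by simp
  ultimately have "{a, b} \<in> cycle_edges ps" unfolding ce n_def[symmetric] by blast
  thus ?thesis using cyc by blast
qed

lemma uni_iso:
  assumes sg: "simple_graph V E" and tec: "two_edge_connected V E" and uc: "unicyclic V E"
    and nd: "\<And>v. v \<in> V \<Longrightarrow> \<exists>u. E v u"
  shows "\<exists>n \<ge> 3. isomorphic_to_cycle V E n"
proof -
  have sym: "\<And>x y. E x y \<Longrightarrow> E y x" and irr: "\<And>x. \<not> E x x"
    and inV: "\<And>x y. E x y \<Longrightarrow> x \<in> V \<and> y \<in> V" using sg by (auto simp: simple_graph_def)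
  have "\<exists>!C. C \<in> {cycle_edges xs | xs. is_cycle V E xs}" using uc unfolding unicyclic_def by (rule conjunct2)
  then obtain C where C: "C \<in> {cycle_edges xs | xs. is_cycle V E xs}"
    and Cu: "\<And>C'. C' \<in> {cycle_edges xs | xs. is_cycle V E xs} \<Longrightarrow> C' = C" by (rule ex1E) blast
  from C obtain xs where xs: "is_cycle V E xs" and Cx: "C = cycle_edges xs" by blast
  have uq: "cycle_edges ys = cycle_edges xs" if "is_cycle V E ys" for ys
    using Cu[of "cycle_edges ys"] that Cx by blast
  define n where "n = length xs"
  have dxs: "distinct xs" and n3: "n \<ge> 3" and sV: "set xs \<subseteq> V"
    and cadj: "\<And>i. i < n \<Longrightarrow> E (xs ! i) (xs ! ((i + 1) mod n))"
    using xs unfolding is_cycle_def n_def by auto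
  have ce: "cycle_edges xs = {{xs ! i, xs ! ((i + 1) mod n)} | i. i < n}"
    unfolding cycle_edges_def n_def by simp
  have ec: "{a, b} \<in> cycle_edges xs" if "E a b" for a b
    using edge_on_cycle[OF sg tec that] uq by blast
  have Vxs: "V = set xs"
  proof
    show "V \<subseteq> set xs"
    proof
      fix v assume v: "v \<in> V"
      then obtain u where "E v u" using nd by blast
      hence "{v, u} \<in> cycle_edges xs" by (rule ec)
      then obtain i where "i < n" "{v, u} = {xs ! i, xs ! ((i + 1) mod n)}" unfolding ce by blast
      moreover have "(i + 1) mod n < n" using n3 by simp
      ultimately show "v \<in> set xs" unfolding n_def by (metis doubleton_eq_iff nth_mem)
    qed
  qed (rule sV)
  have iso: "E (xs ! i) (xs ! j) \<longleftrightarrow> cycle_graph_E n i j" if i: "i < n" and j: "j < n" for i j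
  proof
    assume e: "E (xs ! i) (xs ! j)"
    have ij: "i \<noteq> j" using e irr by blast
    obtain l where l: "l < n" "{xs ! i, xs ! j} = {xs ! l, xs ! ((l + 1) mod n)}"
      using ec[OF e] unfolding ce by blast
    have l1: "(l + 1) mod n < n" using n3 by simp
    have "(xs ! i = xs ! l \<and> xs ! j = xs ! ((l + 1) mod n)) \<or> (xs ! i = xs ! ((l + 1) mod n) \<and> xs ! j = xs ! l)"
      using l(2) by (metis doubleton_eq_iff)
    hence "(i = l \<and> j = (l + 1) mod n) \<or> (i = (l + 1) mod n \<and> j = l)"
      using nth_eq_iff_index_eq[OF dxs] i j l(1) l1 unfolding n_def by metis
    thus "cycle_graph_E n i j" unfolding cycle_graph_E_def using i j ij by blast
  next
    assume c: "cycle_graph_E n i j"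
    hence "i \<noteq> j" "j = (i + 1) mod n \<or> i = (j + 1) mod n" unfolding cycle_graph_E_def by auto
    thus "E (xs ! i) (xs ! j)" using cadj i j sym by blast
  qed
  define f where "f = inv_into {0..<n} ((!) xs)"
  have bn: "bij_betw ((!) xs) {0..<n} V"
    using bij_betw_nth[OF dxs] Vxs unfolding n_def by (simp add: lessThan_atLeast0)
  have bf: "bij_betw f V {0..<n}" unfolding f_def by (rule bij_betw_inv_into[OF bn])
  have fx: "xs ! (f x) = x" if x: "x \<in> V" for x
  proof -
    have "x \<in> (!) xs ` {0..<n}" using bn x by (simp add: bij_betw_def)
    thus ?thesis unfolding f_def by (rule f_inv_into_f)
  qed
  have fl: "x \<in> V \<Longrightarrow> f x < n" for x using bf by (auto simp: bij_betw_def)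
  have "isomorphic_to_cycle V E n" unfolding isomorphic_to_cycle_def
  proof (intro exI[of _ f] conjI ballI)
    show "bij_betw f V {0..<n}" by (rule bf)
    fix x y assume "x \<in> V" "y \<in> V"
    thus "E x y = cycle_graph_E n (f x) (f y)" using iso[of "f x" "f y"] fx fl by metis
  qed
  thus ?thesis using n3 by blast
qed


theorem corollary3p2:
  fixes V :: "'a set" and E :: "'a \<Rightarrow> 'a \<Rightarrow> bool"
  assumes "simple_graph V E"
  shows "(hypo_unique_domination V E \<and> card V \<ge> 3 \<longrightarrow>
            two_edge_connected V E \<and> min_degree V E \<ge> 2)
       \<and> (unicyclic V E \<longrightarrow>
            (hypo_unique_domination V E \<longleftrightarrow> (\<exists>k::nat. k \<ge> 1 \<and> isomorphic_to_cycle V E (3 * k + 1))))"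
proof (rule conjI[OF impI impI])
  note sg = assms
  assume h: "hypo_unique_domination V E \<and> card V \<ge> 3"
  have "hud V E" using sg h by (simp add: hud_def)
  then interpret hud V E .
  show "two_edge_connected V E \<and> min_degree V E \<ge> 2" using two_ec mindeg by simp
next
  note sg = assms
  assume uc: "unicyclic V E"
  show "hypo_unique_domination V E \<longleftrightarrow> (\<exists>k::nat. k \<ge> 1 \<and> isomorphic_to_cycle V E (3 * k + 1))"
  proof
    assume H: "hypo_unique_domination V E"
    obtain xs where xs: "is_cycle V E xs" using uc unfolding unicyclic_def by blast
    have c3: "card V \<ge> 3"
    proof -
      have "length xs = card (set xs)" using xs by (simp add: is_cycle_def distinct_card)
      also have "\<dots> \<le> card V" using xs sg by (intro card_mono) (auto simp: is_cycle_def simple_graph_def)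
      finally show ?thesis using xs by (simp add: is_cycle_def)
    qed
    have "hud V E" using sg H c3 by (simp add: hud_def)
    then interpret hud V E .
    obtain n where n: "n \<ge> 3" "isomorphic_to_cycle V E n" using uni_iso[OF sg two_ec uc] no_iso by blast
    then obtain f where f: "bij_betw f V {0..<n}"
      "\<forall>x\<in>V. \<forall>y\<in>V. E x y \<longleftrightarrow> cycle_graph_E n (f x) (f y)"
      unfolding isomorphic_to_cycle_def by blast
    have "hypo_unique_domination {0..<n} (cycle_graph_E n)" using hud_iso[OF f] H by simp
    hence "(n - 1) mod 3 = 0" using cyc_hud[OF n(1)] by simp
    then obtain q where q: "n - 1 = 3 * q" by blast
    have "n = 3 * q + 1" using q n(1) by simp
    moreover have "q \<ge> 1" using q n(1) by (cases q) auto
    ultimately show "\<exists>k::nat. k \<ge> 1 \<and> isomorphic_to_cycle V E (3 * k + 1)" using n(2) by blast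
  next
    assume "\<exists>k::nat. k \<ge> 1 \<and> isomorphic_to_cycle V E (3 * k + 1)"
    then obtain k where k: "k \<ge> 1" "isomorphic_to_cycle V E (3 * k + 1)" by blast
    then obtain f where f: "bij_betw f V {0..<3 * k + 1}"
      "\<forall>x\<in>V. \<forall>y\<in>V. E x y \<longleftrightarrow> cycle_graph_E (3 * k + 1) (f x) (f y)"
      unfolding isomorphic_to_cycle_def by blast
    have "hypo_unique_domination {0..<3 * k + 1} (cycle_graph_E (3 * k + 1))"
      using cyc_hud[of "3 * k + 1"] k(1) by simp
    thus "hypo_unique_domination V E" using hud_iso[OF f] by simp
  qed
qed

end
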